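(* Let ${\cal F}=(V,E)$ be a hypergraph with $V=[n]$ and all hyperedges in $E$ of size at most $d$. Let $q$ and $\chi$ be positive integers such that $1\leq q\leq |E|-1$ and $\chi=\min\{ |\bigcup_{i=1}^q e'_i\setminus e| : e,e'_1,\ldots,e'_q \text{ are } q+1 \text{ distinct hyperedges of } E\}$. Then, in the group testing model where exactly one hyperedge $e^*\in E$ is the defective (contaminated) set and a test on a pool $T\subseteq[n]$ is positive if and only if $T\cap e^*\neq\emptyset$, there exists a trivial two-stage group testing algorithm (two stages, each completely non-adaptive, with the second stage consisting only of tests on individual elements) that finds the defective hyperedge and uses a number of tests $t$ with $$ t< \frac {2e(d+\chi)}{\chi} \left(1+ \ln\left({d+\chi-1\choose d+\chi-d-1}\beta\right)\right)+dq,$$ where $\beta=\min\left\{e^q|E|\left({|E|-1\over q}\right)^q, e^{d+\chi-1}\left({n+d-1\over d+\chi-1}\right)^{d+\chi}\right\}$ and $e=2.7182\ldots$ is the base of the natural logarithm.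
   Context: Group testing in a hypergraph ${\cal F}=([n],E)$: the set of defective elements is one unknown hyperedge $e^*\in E$; a test on a pool of elements answers "yes" iff the pool contains at least one defective element. A two-stage algorithm consists of two stages, each a completely non-adaptive algorithm (all tests of a stage chosen beforehand); it is trivial if the second stage only tests individual elements. The first stage tests the pools given by the rows of a selector, after which at most $q$ candidate hyperedges remain, and the second stage individually tests their at most $dq$ vertices. *)

theory Defs
  imports Complex_Main
begin

definition test_result :: "nat set \<Rightarrow> nat set \<Rightarrow> bool" where
  "test_result T def \<longleftrightarrow> T \<inter> def \<noteq> {}"

definition stage1_outcome :: "nat set list \<Rightarrow> nat set \<Rightarrow> bool list" where
  "stage1_outcome Ts def = map (\<lambda>T. test_result T def) Ts"

text \<open>A trivial two-stage algorithm on V = {1..n} for hypergraph E: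
  stage 1 tests the pools Ts (fixed in advance); stage 2 tests individually the
  elements of S o (a set of vertices depending only on the stage-1 outcome o);
  the answers to stage 2 are exactly which of these elements are defective,
  i.e. S o \<inter> e*.\<close>
definition trivial_two_stage_alg ::
  "nat \<Rightarrow> nat set set \<Rightarrow> nat set list \<Rightarrow> (bool list \<Rightarrow> nat set)
     \<Rightarrow> (bool list \<Rightarrow> nat set \<Rightarrow> nat set) \<Rightarrow> bool" where
  "trivial_two_stage_alg n E Ts S dec \<longleftrightarrow>
     (\<forall>T\<in>set Ts. T \<subseteq> {1..n}) \<and>
     (\<forall>r. S r \<subseteq> {1..n}) \<and>
     (\<forall>e\<in>E. dec (stage1_outcome Ts e) (S (stage1_outcome Ts e) \<inter> e) = e)"

definition num_tests :: "nat set set \<Rightarrow> nat set list \<Rightarrow> (bool list \<Rightarrow> nat set) \<Rightarrow> nat" where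
  "num_tests E Ts S = length Ts + Max ((\<lambda>e. card (S (stage1_outcome Ts e))) ` E)"

end

theory Submission
  imports Defs
begin

definition wt :: "nat set \<Rightarrow> real \<Rightarrow> nat set \<Rightarrow> real" where
  "wt U p T = p ^ card T * (1 - p) ^ (card U - card T)"

lemma sum_pow_subsets:
  fixes p r :: real
  assumes "finite W"
  shows "(\<Sum>T\<in>Pow W. p ^ card T * r ^ (card W - card T)) = (p + r) ^ card W"
proof -
  have "(p + r) ^ card W = (\<Prod>x\<in>W. p + r)" by simp
  also have "\<dots> = (\<Sum>X\<in>Pow W. (\<Prod>x\<in>X. p) * (\<Prod>x\<in>W-X. r))"
    by (rule prod_add[OF assms])
  also have "\<dots> = (\<Sum>T\<in>Pow W. p ^ card T * r ^ (card W - card T))"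
    apply (rule sum.cong[OF refl])
    using assms by (auto simp: card_Diff_subset finite_subset)
  finally show ?thesis by simp
qed

lemma wt_avoid:
  assumes "finite U" "Z \<subseteq> U"
  shows "(\<Sum>T\<in>{T\<in>Pow U. T \<inter> Z = {}}. wt U p T) = (1 - p) ^ card Z"
proof -
  have eq: "{T\<in>Pow U. T \<inter> Z = {}} = Pow (U - Z)" by auto
  have fin: "finite (U - Z)" using assms by auto
  have cU: "card U = card Z + card (U - Z)"
    using assms by (metis card_Diff_subset card_mono diff_add_inverse le_add_diff_inverse finite_subset)
  have "(\<Sum>T\<in>Pow (U - Z). wt U p T) = (\<Sum>T\<in>Pow (U - Z). (1-p) ^ card Z * (p ^ card T * (1-p) ^ (card (U-Z) - card T)))"
  proof (rule sum.cong[OF refl])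
    fix T assume "T \<in> Pow (U - Z)"
    then have "card T \<le> card (U - Z)" using fin by (simp add: card_mono)
    then have "card U - card T = card Z + (card (U-Z) - card T)" using cU by simp
    then show "wt U p T = (1-p) ^ card Z * (p ^ card T * (1-p) ^ (card (U-Z) - card T))"
      unfolding wt_def by (simp add: power_add)
  qed
  also have "\<dots> = (1-p) ^ card Z * (p + (1 - p)) ^ card (U - Z)"
    by (simp add: sum_distrib_left[symmetric] sum_pow_subsets[OF fin])
  finally show ?thesis using eq by simp
qed

lemma wt_total:
  assumes "finite U"
  shows "(\<Sum>T\<in>Pow U. wt U p T) = 1"
  using wt_avoid[OF assms, of "{}" p] by (simp add: Pow_def)

lemma wt_cov:
  assumes "finite U" "e \<subseteq> U" "Y \<subseteq> U" "e \<inter> Y = {}"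
  shows "(\<Sum>T\<in>{T\<in>Pow U. T \<inter> e = {} \<and> T \<inter> Y \<noteq> {}}. wt U p T)
         = (1 - p) ^ card e * (1 - (1 - p) ^ card Y)"
proof -
  have eq: "{T\<in>Pow U. T \<inter> e = {} \<and> T \<inter> Y \<noteq> {}} = {T\<in>Pow U. T \<inter> e = {}} - {T\<in>Pow U. T \<inter> (e \<union> Y) = {}}"
    by auto
  have sub: "{T\<in>Pow U. T \<inter> (e \<union> Y) = {}} \<subseteq> {T\<in>Pow U. T \<inter> e = {}}" by auto
  have fin: "finite {T\<in>Pow U. T \<inter> e = {}}" using assms by auto
  have ce: "card (e \<union> Y) = card e + card Y"
    using assms by (meson card_Un_disjoint finite_subset)
  show ?thesis
    unfolding eq sum_diff[OF fin sub]
    using wt_avoid[OF assms(1,2), of p] wt_avoid[OF assms(1), of "e \<union> Y" p] assms ce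
    by (simp add: power_add algebra_simps)
qed

lemma wt_pos:
  assumes "0 < p" "p < 1"
  shows "0 < wt U p T" unfolding wt_def using assms by simp

lemma averaging:
  fixes cov :: "nat set \<Rightarrow> 'b \<Rightarrow> bool" and R :: "'b set"
  assumes U: "finite U" and R: "finite R" and p: "0 < p" "p < 1"
    and P: "\<forall>ev\<in>R. (\<Sum>T\<in>{T\<in>Pow U. cov T ev}. wt U p T) \<ge> P"
  shows "\<exists>T\<in>Pow U. real (card {ev\<in>R. \<not> cov T ev}) \<le> (1 - P) * card R"
proof (rule ccontr)
  assume "\<not> ?thesis"
  then have gt: "\<forall>T\<in>Pow U. real (card {ev\<in>R. \<not> cov T ev}) > (1 - P) * card R" by (auto simp: not_le)
  have finP: "finite (Pow U)" using U by simp
  have "(1 - P) * card R = (\<Sum>T\<in>Pow U. wt U p T * ((1 - P) * card R))"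
    by (simp add: sum_distrib_right[symmetric] wt_total[OF U])
  also have "\<dots> < (\<Sum>T\<in>Pow U. wt U p T * real (card {ev\<in>R. \<not> cov T ev}))"
    apply (rule sum_strict_mono[OF finP])
    using gt wt_pos[OF p] by auto
  also have "\<dots> = (\<Sum>T\<in>Pow U. \<Sum>ev\<in>R. (if cov T ev then 0 else wt U p T))"
    apply (rule sum.cong[OF refl])
    using R by (simp add: sum_distrib_left sum.If_cases Int_def)
  also have "\<dots> = (\<Sum>ev\<in>R. \<Sum>T\<in>Pow U. (if cov T ev then 0 else wt U p T))"
    by (rule sum.swap)
  also have "\<dots> = (\<Sum>ev\<in>R. 1 - (\<Sum>T\<in>{T\<in>Pow U. cov T ev}. wt U p T))"
  proof (rule sum.cong[OF refl])
    fix ev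
    have "(\<Sum>T\<in>Pow U. wt U p T) = (\<Sum>T\<in>Pow U. (if cov T ev then 0 else wt U p T)) + (\<Sum>T\<in>{T\<in>Pow U. cov T ev}. wt U p T)"
    proof -
      have e: "Pow U = {T\<in>Pow U. \<not> cov T ev} \<union> {T\<in>Pow U. cov T ev}" by auto
      have "(\<Sum>T\<in>Pow U. wt U p T) = (\<Sum>T\<in>{T\<in>Pow U. \<not> cov T ev}. wt U p T) + (\<Sum>T\<in>{T\<in>Pow U. cov T ev}. wt U p T)"
        by (subst e, rule sum.union_disjoint) (use U in auto)
      moreover have "(\<Sum>T\<in>Pow U. (if cov T ev then 0 else wt U p T)) = (\<Sum>T\<in>{T\<in>Pow U. \<not> cov T ev}. wt U p T)"
        using finP by (simp add: sum.If_cases Int_def)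
      ultimately show ?thesis by simp
    qed
    then show "(\<Sum>T\<in>Pow U. (if cov T ev then 0 else wt U p T)) = 1 - (\<Sum>T\<in>{T\<in>Pow U. cov T ev}. wt U p T)"
      using wt_total[OF U, of p] by simp
  qed
  also have "\<dots> \<le> (\<Sum>ev\<in>R. 1 - P)"
    apply (rule sum_mono) using P by auto
  also have "\<dots> = (1 - P) * card R" by simp
  finally show False by simp
qed

lemma iterate:
  fixes cov :: "nat set \<Rightarrow> 'b \<Rightarrow> bool" and Ev :: "'b set"
  assumes U: "finite U" and Ev: "finite Ev" and p: "0 < p" "p < 1" and P1: "P \<le> 1"
    and P: "\<forall>ev\<in>Ev. (\<Sum>T\<in>{T\<in>Pow U. cov T ev}. wt U p T) \<ge> P"
  shows "\<exists>Ts. length Ts = t \<and> set Ts \<subseteq> Pow U \<and>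
     real (card {ev\<in>Ev. \<not> (\<exists>T\<in>set Ts. cov T ev)}) \<le> (1 - P) ^ t * card Ev"
proof (induction t)
  case 0
  show ?case by (rule exI[of _ "[]"]) (simp add: card_mono Ev)
next
  case (Suc t)
  then obtain Ts where Ts: "length Ts = t" "set Ts \<subseteq> Pow U"
    "real (card {ev\<in>Ev. \<not> (\<exists>T\<in>set Ts. cov T ev)}) \<le> (1 - P) ^ t * card Ev" by blast
  define R where "R = {ev\<in>Ev. \<not> (\<exists>T\<in>set Ts. cov T ev)}"
  have finR: "finite R" using Ev unfolding R_def by simp
  obtain T where T: "T \<in> Pow U" "real (card {ev\<in>R. \<not> cov T ev}) \<le> (1 - P) * card R"
    using averaging[OF U finR p, where cov=cov and P=P] P unfolding R_def by auto
  have eq: "{ev\<in>Ev. \<not> (\<exists>T'\<in>set (T # Ts). cov T' ev)} = {ev\<in>R. \<not> cov T ev}"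
    unfolding R_def by auto
  have "(1 - P) * card R \<le> (1 - P) * ((1 - P) ^ t * card Ev)"
    apply (rule mult_left_mono) using Ts(3) P1 unfolding R_def by auto
  then show ?case
    apply (intro exI[of _ "T # Ts"])
    using Ts T eq by auto
qed

lemma pow_le_exp_fact: "real k ^ k \<le> exp (real k) * fact k"
proof (induction k)
  case 0 then show ?case by simp
next
  case (Suc k)
  show ?case
  proof (cases "k = 0")
    case True then show ?thesis using exp_ge_add_one_self[of 1] by simp
  next
    case False
    then have kp: "real k > 0" by simp
    have b: "(1 + 1 / real k) ^ k \<le> exp 1"
    proof -
      have "(1 + 1 / real k) ^ k \<le> exp (1 / real k) ^ k"
        by (rule power_mono) (use exp_ge_add_one_self[of "1/real k"] kp in auto)
      also have "\<dots> = exp 1" using kp by (simp add: exp_of_nat_mult[symmetric])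
      finally show ?thesis .
    qed
    have "real (Suc k) ^ Suc k = real (Suc k) * (real k ^ k * (1 + 1 / real k) ^ k)"
      using kp by (simp add: power_mult_distrib[symmetric] field_simps)
    also have "\<dots> \<le> real (Suc k) * (exp (real k) * fact k * exp 1)"
      by (intro mult_left_mono mult_mono Suc.IH b) auto
    also have "\<dots> = exp (real (Suc k)) * fact (Suc k)"
      by (simp add: exp_add[symmetric] algebra_simps)
    finally show ?thesis .
  qed
qed

lemma t1:
  assumes True: "k \<le> N"
  shows "real (N choose k) * fact k = fact N / fact (N - k)"
proof -
  have "fact k * fact (N - k) * (N choose k) = (fact N :: nat)" by (rule binomial_fact_lemma[OF True])
  then have "(fact k * fact (N - k) * real (N choose k)) = fact N"
    by (metis of_nat_fact of_nat_mult)
  then show ?thesis by (simp add: field_simps)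
qed
lemma t2:
  assumes True: "k \<le> N"
  shows "fact N / fact (N - k) \<le> (real N ^ k)"
proof -
  have a: "fact N div fact (N - k) \<le> N ^ k" by (rule fact_div_fact_le_pow[OF True])
  have b: "fact (N - k) dvd (fact N :: nat)" by (simp add: fact_dvd)
  have "real (fact N div fact (N - k)) = real (fact N) / real (fact (N - k))"
    using b by (rule real_of_nat_div)
  then have "fact N / fact (N - k) = real (fact N div fact (N - k))" by simp
  also have "\<dots> \<le> real (N ^ k)" using a by (simp only: of_nat_le_iff)
  finally show ?thesis by simp
qed
lemma choose_le_exp:
  assumes "k \<ge> 1"
  shows "real (N choose k) \<le> (exp 1 * real N / real k) ^ k"
proof (cases "k \<le> N")
  case False
  then have "N < k" by simp
  then have "N choose k = 0" by (rule binomial_eq_0)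
  moreover have "0 \<le> (exp 1 * real N / real k) ^ k" by (intro zero_le_power) simp
  ultimately show ?thesis by (metis of_nat_0)
next
  case True
  have "real (N choose k) * fact k \<le> real N ^ k"
    using t1[OF True] t2[OF True] by simp
  then have 1: "real (N choose k) \<le> real N ^ k / fact k"
    by (simp add: pos_le_divide_eq)
  have kp: "real k ^ k > 0" using assms by simp
  have 2: "real k ^ k \<le> exp (real k) * fact k" by (rule pow_le_exp_fact)
  have "real N ^ k / fact k \<le> real N ^ k * exp (real k) / real k ^ k"
  proof -
    have "real N ^ k * real k ^ k \<le> real N ^ k * (exp (real k) * fact k)"
      by (rule mult_left_mono[OF 2]) simp
    then show ?thesis using kp by (simp add: field_simps)
  qed
  also have "\<dots> = (exp 1 * real N / real k) ^ k"
    by (simp add: power_divide power_mult_distrib exp_of_nat_mult[symmetric])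
  finally show ?thesis using 1 by simp
qed

lemma prob_bound:
  fixes d \<chi> :: nat
  assumes d: "d \<ge> 1" and c: "\<chi> \<ge> 1"
  shows "(1 - 1 / real (d+1)) ^ d * (1 - (1 - 1 / real (d+1)) ^ \<chi>) \<ge> real \<chi> / (exp 1 * real (d + \<chi>))"
proof -
  have dp: "real d > 0" using d by simp
  have e1: "1 - 1 / real (d+1) = 1 / (1 + 1 / real d)" using dp by (simp add: field_simps)
  have b: "(1 + 1 / real d) ^ d \<le> exp 1"
  proof -
    have "(1 + 1 / real d) ^ d \<le> exp (1 / real d) ^ d"
      by (rule power_mono) (use exp_ge_add_one_self[of "1/real d"] dp in auto)
    also have "\<dots> = exp 1" using dp by (simp add: exp_of_nat_mult[symmetric])
    finally show ?thesis .
  qed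
  have A: "(1 - 1 / real (d+1)) ^ d \<ge> 1 / exp 1"
  proof -
    have p: "0 < (1 + 1 / real d) ^ d" using dp by (intro zero_less_power) (simp add: add_pos_pos)
    show ?thesis unfolding e1 power_one_over using b p
      by (intro divide_left_mono) auto
  qed
  have bern: "1 + real \<chi> * (1 / real d) \<le> (1 + 1 / real d) ^ \<chi>"
    proof (rule Bernoulli_inequality)
    have "0 \<le> 1 / real d" by simp
    then show "- 1 \<le> 1 / real d" by linarith
  qed
  have B: "1 - (1 - 1 / real (d+1)) ^ \<chi> \<ge> real \<chi> / real (d + \<chi>)"
  proof -
    have "(1 - 1 / real (d+1)) ^ \<chi> = 1 / (1 + 1 / real d) ^ \<chi>" unfolding e1 power_one_over ..
    also have "\<dots> \<le> 1 / (1 + real \<chi> * (1 / real d))"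
    proof (rule divide_left_mono[OF bern])
      have "0 < 1 + real \<chi> * (1 / real d)" using dp by (simp add: add_pos_nonneg)
      moreover have "0 < (1 + 1 / real d) ^ \<chi>" using dp by (intro zero_less_power) (simp add: add_pos_pos)
      ultimately show "0 < (1 + 1 / real d) ^ \<chi> * (1 + real \<chi> * (1 / real d))" by simp
    qed simp
    also have "\<dots> = real d / real (d + \<chi>)" using dp by (simp add: field_simps)
    finally show ?thesis using dp by (simp add: field_simps)
  qed
  have "real \<chi> / (exp 1 * real (d + \<chi>)) = (1 / exp 1) * (real \<chi> / real (d + \<chi>))" by simp
  also have "\<dots> \<le> (1 - 1 / real (d+1)) ^ d * (1 - (1 - 1 / real (d+1)) ^ \<chi>)"
    by (rule mult_mono[OF A B]) auto
  finally show ?thesis .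
qed

lemma alg:
  fixes E :: "nat set set" and Ts :: "nat set list"
  assumes hyp: "\<forall>e\<in>E. e \<subseteq> {1..n} \<and> card e \<le> d" and finE: "finite E" and ne: "E \<noteq> {}"
    and sep: "\<forall>e\<in>E. \<forall>S. S \<subseteq> E \<and> e \<notin> S \<and> card S = q \<longrightarrow> (\<exists>T\<in>set Ts. T \<inter> e = {} \<and> T \<inter> (\<Union>S - e) \<noteq> {})"
    and Ts: "set Ts \<subseteq> Pow {1..n}"
  shows "\<exists>S dec. trivial_two_stage_alg n E Ts S dec \<and> num_tests E Ts S \<le> length Ts + d * q"
proof -
  define oc where "oc = stage1_outcome Ts"
  define S where "S r = \<Union>{e\<in>E. oc e = r}" for r
  define dec :: "bool list \<Rightarrow> nat set \<Rightarrow> nat set" where "dec r A = A" for r A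
  have sub: "e \<in> E \<Longrightarrow> e \<subseteq> S (oc e)" for e unfolding S_def by auto
  have cardC: "card {e'\<in>E. oc e' = oc e} \<le> q" if e: "e \<in> E" for e
  proof (rule ccontr)
    let ?C = "{e'\<in>E. oc e' = oc e}"
    assume "\<not> ?thesis"
    then have "q \<le> card (?C - {e})" using e by (simp add: card_Diff_singleton finE)
    then obtain S0 where S0: "S0 \<subseteq> ?C - {e}" "card S0 = q" by (meson obtain_subset_with_card_n)
    then have "S0 \<subseteq> E" "e \<notin> S0" by auto
    then obtain T where T: "T \<in> set Ts" "T \<inter> e = {}" "T \<inter> (\<Union>S0 - e) \<noteq> {}"
      using sep e S0 by blast
    then obtain e' where e': "e' \<in> S0" "T \<inter> e' \<noteq> {}" by blast
    have "oc e' = oc e" using e' S0 by auto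
    then have "test_result T e' = test_result T e"
      unfolding oc_def stage1_outcome_def using T(1) by (simp add: map_eq_conv)
    then show False using T(2) e'(2) unfolding test_result_def by simp
  qed
  have cardS: "card (S (oc e)) \<le> d * q" if e: "e \<in> E" for e
  proof -
    have "card (S (oc e)) \<le> sum card {e'\<in>E. oc e' = oc e}"
      unfolding S_def by (rule card_Union_le_sum_card)
    also have "\<dots> \<le> of_nat (card {e'\<in>E. oc e' = oc e}) * d"
      by (rule sum_bounded_above) (use hyp in auto)
    also have "\<dots> \<le> q * d" using cardC[OF e] by simp
    finally show ?thesis by (simp add: mult.commute)
  qed
  have alg: "trivial_two_stage_alg n E Ts S dec"
    unfolding trivial_two_stage_alg_def
  proof (intro conjI)
    show "\<forall>T\<in>set Ts. T \<subseteq> {1..n}" using Ts by auto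
    show "\<forall>r. S r \<subseteq> {1..n}" unfolding S_def using hyp by auto
    show "\<forall>e\<in>E. dec (stage1_outcome Ts e) (S (stage1_outcome Ts e) \<inter> e) = e"
      using sub unfolding dec_def oc_def by auto
  qed
  have "Max ((\<lambda>e. card (S (stage1_outcome Ts e))) ` E) \<le> d * q"
    using finE ne cardS unfolding oc_def by (simp add: Max_le_iff)
  then have "num_tests E Ts S \<le> length Ts + d * q" unfolding num_tests_def by simp
  with alg show ?thesis by blast
qed

lemma cover_exists:
  fixes Ev :: "(nat set \<times> nat set) set" and U :: "nat set" and d \<chi> :: nat and B :: real
  assumes U: "finite U" and Ev: "finite Ev" and d: "d \<ge> 1" and c: "\<chi> \<ge> 1"
    and valid: "\<forall>(e,Y)\<in>Ev. e \<subseteq> U \<and> Y \<subseteq> U \<and> e \<inter> Y = {} \<and> card e \<le> d \<and> card Y \<ge> \<chi>"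
    and B1: "B \<ge> 1" and NB: "real (card Ev) \<le> exp 1 * B ^ 2"
  shows "\<exists>Ts. set Ts \<subseteq> Pow U \<and> (\<forall>(e,Y)\<in>Ev. \<exists>T\<in>set Ts. T \<inter> e = {} \<and> T \<inter> Y \<noteq> {}) \<and>
           real (length Ts) < 2 * exp 1 * real (d + \<chi>) / real \<chi> * (1 + ln B)"
proof -
  define p :: real where "p = 1 / real (d+1)"
  define a :: real where "a = exp 1 * real (d + \<chi>) / real \<chi>"
  define P :: real where "P = real \<chi> / (exp 1 * real (d + \<chi>))"
  define cov where "cov T ev = (T \<inter> fst ev = {} \<and> T \<inter> snd ev \<noteq> {})" for T :: "nat set" and ev :: "nat set \<times> nat set"
  have p: "0 < p" "p < 1" using d unfolding p_def by auto
  have cpos: "real \<chi> > 0" using c by simp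
  have aP: "P = 1 / a" unfolding a_def P_def by simp
  have a1: "a > 1"
  proof -
    have "real (d + \<chi>) / real \<chi> \<ge> 1" using cpos by simp
    moreover have "exp 1 > (1::real)" by simp
    ultimately have "exp 1 * (real (d + \<chi>) / real \<chi>) \<ge> exp 1 * 1"
      by (intro mult_left_mono) auto
    moreover have "exp 1 > (1::real)" by simp
    ultimately have "exp 1 * (real (d + \<chi>) / real \<chi>) > 1" by linarith
    then show ?thesis unfolding a_def by simp
  qed
  have P0: "P > 0" and P1: "P \<le> 1" using a1 aP by auto
  have probs: "\<forall>ev\<in>Ev. (\<Sum>T\<in>{T\<in>Pow U. cov T ev}. wt U p T) \<ge> P"
  proof
    fix ev assume ev: "ev \<in> Ev"
    obtain e Y where eY: "ev = (e, Y)" by fastforce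
    have v: "e \<subseteq> U" "Y \<subseteq> U" "e \<inter> Y = {}" "card e \<le> d" "card Y \<ge> \<chi>" using valid ev eY by auto
    have "(\<Sum>T\<in>{T\<in>Pow U. cov T ev}. wt U p T) = (1 - p) ^ card e * (1 - (1 - p) ^ card Y)"
      unfolding eY cov_def using wt_cov[OF U v(1-3)] by simp
    also have "\<dots> \<ge> (1 - p) ^ d * (1 - (1 - p) ^ \<chi>)"
    proof (rule mult_mono)
      show "(1 - p) ^ d \<le> (1 - p) ^ card e" using p v by (intro power_decreasing) auto
      show "1 - (1 - p) ^ \<chi> \<le> 1 - (1 - p) ^ card Y"
        using p v power_decreasing[of \<chi> "card Y" "1-p"] by auto
      show "0 \<le> (1 - p) ^ card e" using p by simp
      show "0 \<le> 1 - (1 - p) ^ \<chi>" using p by (simp add: power_le_one)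
    qed
    finally have "(\<Sum>T\<in>{T\<in>Pow U. cov T ev}. wt U p T) \<ge> (1 - p) ^ d * (1 - (1 - p) ^ \<chi>)" .
    moreover have "(1 - p) ^ d * (1 - (1 - p) ^ \<chi>) \<ge> P"
      unfolding p_def P_def by (rule prob_bound[OF d c])
    ultimately show "(\<Sum>T\<in>{T\<in>Pow U. cov T ev}. wt U p T) \<ge> P" by linarith
  qed
  have lnB: "ln B \<ge> 0" using B1 by simp
  have rhs_pos: "0 < 2 * exp 1 * real (d + \<chi>) / real \<chi> * (1 + ln B)"
    using cpos lnB by (intro mult_pos_pos) auto
  have rhs_eq: "2 * exp 1 * real (d + \<chi>) / real \<chi> * (1 + ln B) = 2 * a * (1 + ln B)"
    unfolding a_def by simp
  show ?thesis
  proof (cases "card Ev = 0")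
    case True
    then have "Ev = {}" using Ev by simp
    then show ?thesis using rhs_pos by (intro exI[of _ "[]"]) auto
  next
    case False
    define N where "N = real (card Ev)"
    have N1: "N \<ge> 1" using False unfolding N_def by simp
    define t where "t = nat \<lfloor>a * ln N\<rfloor> + 1"
    have lnN: "ln N \<ge> 0" using N1 by simp
    have t_gt: "real t > a * ln N" unfolding t_def using a1 lnN by linarith
    have t_le: "real t \<le> a * ln N + 1" unfolding t_def using a1 lnN
      by (simp add: of_nat_nat) 
    obtain Ts where Ts: "length Ts = t" "set Ts \<subseteq> Pow U"
      "real (card {ev\<in>Ev. \<not> (\<exists>T\<in>set Ts. cov T ev)}) \<le> (1 - P) ^ t * card Ev"
      using iterate[OF U Ev p P1 probs] by blast
    have "(1 - P) ^ t \<le> exp (- P) ^ t"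
      by (rule power_mono) (use P1 exp_ge_add_one_self[of "-P"] in auto)
    also have "\<dots> = exp (- (P * real t))" by (simp add: exp_of_nat_mult[symmetric] mult.commute)
    also have "\<dots> < exp (- ln N)"
    proof -
      have "P * real t > P * (a * ln N)" using t_gt P0 by simp
      then have "P * real t > ln N" using aP a1 by simp
      then show ?thesis by simp
    qed
    also have "\<dots> = 1 / N" using N1 by (simp add: exp_minus exp_ln inverse_eq_divide)
    finally have "(1 - P) ^ t * N < 1" using N1 by (simp add: field_simps)
    then have "card {ev\<in>Ev. \<not> (\<exists>T\<in>set Ts. cov T ev)} = 0" using Ts(3) unfolding N_def by linarith
    then have allcov: "\<forall>ev\<in>Ev. \<exists>T\<in>set Ts. cov T ev" using Ev by fastforce
    have "ln N \<le> ln (exp 1 * B ^ 2)" using N1 NB unfolding N_def by simp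
    also have "\<dots> = 1 + 2 * ln B" using B1 by (simp add: ln_mult ln_realpow)
    finally have "a * ln N \<le> a * (1 + 2 * ln B)" using a1 by (intro mult_left_mono) auto
    then have "real t \<le> a * (1 + 2 * ln B) + 1" using t_le by linarith
    also have "\<dots> < 2 * a * (1 + ln B)" using a1 lnB by (simp add: algebra_simps)
    finally have "real (length Ts) < 2 * exp 1 * real (d + \<chi>) / real \<chi> * (1 + ln B)"
      using Ts(1) rhs_eq by simp
    then show ?thesis using Ts(2) allcov unfolding cov_def by (intro exI[of _ Ts]) fastforce
  qed
qed

lemma fin_subs: "finite Z \<Longrightarrow> finite {Y. Y \<subseteq> Z \<and> card Y = k}"
  by (rule finite_subset[of _ "Pow Z"]) auto

lemma count_ev2:
  fixes E :: "nat set set"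
  assumes hyp: "\<forall>e\<in>E. e \<subseteq> {1..n} \<and> card e \<le> d" and finE: "finite E"
  shows "card {(e,Y). e \<in> E \<and> Y \<subseteq> {1..n} - e \<and> card Y = \<chi>} \<le> ((n+d) choose (d+\<chi>)) * ((d+\<chi>) choose \<chi>)"
proof -
  define Ev where "Ev = {(e,Y). e \<in> E \<and> Y \<subseteq> {1..n} - e \<and> card Y = \<chi>}"
  define pad where "pad e = {n+1..n+(d - card e)}" for e :: "nat set"
  define f where "f ev = (fst ev \<union> snd ev \<union> pad (fst ev), snd ev)" for ev
  define Zs where "Zs = {Z. Z \<subseteq> {1..n+d} \<and> card Z = d+\<chi>}"
  define Tg where "Tg = (SIGMA Z:Zs. {Y. Y \<subseteq> Z \<and> card Y = \<chi>})"
  have finZs: "finite Zs" unfolding Zs_def by (rule finite_subset[of _ "Pow {1..n+d}"]) auto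
  have finTg: "finite Tg" unfolding Tg_def using finZs
    by (intro finite_SigmaI) (auto simp: Zs_def intro!: fin_subs intro: finite_subset)
  have inj: "inj_on f Ev"
  proof (rule inj_onI)
    fix x y assume x: "x \<in> Ev" and y: "y \<in> Ev" and eq: "f x = f y"
    obtain e Y where xe: "x = (e,Y)" by fastforce
    obtain e' Y' where ye: "y = (e',Y')" by fastforce
    have Y: "Y = Y'" using eq unfolding f_def xe ye by simp
    have Z: "e \<union> Y \<union> pad e = e' \<union> Y' \<union> pad e'" using eq unfolding f_def xe ye by auto
    have r: "e = (e \<union> Y \<union> pad e) \<inter> {1..n} - Y" using x hyp unfolding xe Ev_def pad_def by auto
    have r': "e' = (e' \<union> Y' \<union> pad e') \<inter> {1..n} - Y'" using y hyp unfolding ye Ev_def pad_def by auto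
    show "x = y" using r r' Z Y xe ye by simp
  qed
  have img: "f ` Ev \<subseteq> Tg"
  proof
    fix z assume "z \<in> f ` Ev"
    then obtain e Y where eY: "(e,Y) \<in> Ev" "z = f (e,Y)" by auto
    have e: "e \<in> E" "Y \<subseteq> {1..n} - e" "card Y = \<chi>" using eY(1) unfolding Ev_def by auto
    have eU: "e \<subseteq> {1..n}" "card e \<le> d" using hyp e(1) by auto
    have fine: "finite e" using eU finite_subset by blast
    have finY: "finite Y" using e(2) finite_subset by blast
    have d1: "(e \<union> Y) \<inter> pad e = {}" using eU e(2) unfolding pad_def by auto
    have "card (e \<union> Y \<union> pad e) = card (e \<union> Y) + card (pad e)"
      by (rule card_Un_disjoint) (use fine finY d1 pad_def in auto)
    also have "card (e \<union> Y) = card e + card Y"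
      by (rule card_Un_disjoint) (use fine finY e(2) in auto)
    also have "card (pad e) = d - card e" unfolding pad_def by simp
    finally have c: "card (e \<union> Y \<union> pad e) = d + \<chi>" using eU(2) e(3) by simp
    have s: "e \<union> Y \<union> pad e \<subseteq> {1..n+d}" using eU e(2) unfolding pad_def by auto
    show "z \<in> Tg" unfolding eY(2) f_def Tg_def Zs_def using c s e(3) by auto
  qed
  have "card Ev \<le> card Tg" by (rule card_inj_on_le[OF inj img finTg])
  also have "card Tg = (\<Sum>Z\<in>Zs. card {Y. Y \<subseteq> Z \<and> card Y = \<chi>})"
    unfolding Tg_def using finZs by (intro card_SigmaI) (auto simp: Zs_def intro!: fin_subs intro: finite_subset)
  also have "\<dots> = (\<Sum>Z\<in>Zs. (d+\<chi>) choose \<chi>)"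
  proof (rule sum.cong[OF refl])
    fix Z assume "Z \<in> Zs"
    then have "finite Z" "card Z = d + \<chi>" unfolding Zs_def by (auto intro: finite_subset)
    then show "card {Y. Y \<subseteq> Z \<and> card Y = \<chi>} = (d+\<chi>) choose \<chi>" using n_subsets[of Z \<chi>] by simp
  qed
  also have "\<dots> = card Zs * ((d+\<chi>) choose \<chi>)" by simp
  also have "card Zs = (n+d) choose (d+\<chi>)" unfolding Zs_def using n_subsets[of "{1..n+d}" "d+\<chi>"] by simp
  finally show ?thesis unfolding Ev_def .
qed

lemma ge1_mult:
  fixes a b :: real
  assumes "1 \<le> a" "1 \<le> b"
  shows "1 \<le> a * b"
proof -
  have "1 * 1 \<le> a * b" by (rule mult_mono) (use assms in auto)
  then show ?thesis by simp
qed

lemma le_mult_ge1: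
  fixes a b :: real
  assumes "1 \<le> a" "0 \<le> b"
  shows "b \<le> a * b"
  using mult_right_mono[OF assms(1) assms(2)] by simp

theorem theorem3:
  fixes n d q \<chi> :: nat and E :: "nat set set"
  assumes hyp: "\<forall>e\<in>E. e \<subseteq> {1..n} \<and> card e \<le> d"
    and q_pos: "1 \<le> q" and q_le: "q \<le> card E - 1"
    and chi_pos: "0 < \<chi>"
    and chi_def: "\<chi> = Min {card (\<Union>S - e) | e S. e \<in> E \<and> S \<subseteq> E \<and> e \<notin> S \<and> card S = q}"
  shows "\<exists>Ts S dec. trivial_two_stage_alg n E Ts S dec \<and>
     real (num_tests E Ts S) <
       2 * exp 1 * real (d + \<chi>) / real \<chi> *
         (1 + ln (real ((d + \<chi> - 1) choose (d + \<chi> - d - 1)) *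
                  min (exp (real q) * real (card E) * ((real (card E) - 1) / real q) ^ q)
                      (exp (real (d + \<chi> - 1)) *
                         ((real n + real d - 1) / real (d + \<chi> - 1)) ^ (d + \<chi>))))
       + real (d * q)"
proof -
  define U where "U = {1..n}"
  have finU: "finite U" unfolding U_def by simp
  have EU: "E \<subseteq> Pow U" using hyp unfolding U_def by auto
  have finE: "finite E" using EU finU by (meson finite_Pow_iff finite_subset)
  have cE: "card E \<ge> q + 1" using q_le q_pos by linarith
  then have neE: "E \<noteq> {}" by auto
  define Q where "Q = {card (\<Union>S - e) | e S. e \<in> E \<and> S \<subseteq> E \<and> e \<notin> S \<and> card S = q}"
  have Qsub: "Q \<subseteq> {0..n}"
  proof
    fix k assume "k \<in> Q"
    then obtain e S where k: "k = card (\<Union>S - e)" "S \<subseteq> E" unfolding Q_def by auto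
    have "\<Union>S - e \<subseteq> U" using k(2) EU by auto
    then have "k \<le> card U" unfolding k(1) using finU card_mono by blast
    then show "k \<in> {0..n}" unfolding U_def by simp
  qed
  have finQ: "finite Q" using Qsub finite_subset by blast
  have neQ: "Q \<noteq> {}"
  proof -
    obtain e where e: "e \<in> E" using neE by auto
    have "q \<le> card (E - {e})" using e cE finE by (simp add: card_Diff_singleton)
    then obtain S where "S \<subseteq> E - {e}" "card S = q" by (meson obtain_subset_with_card_n)
    then show ?thesis unfolding Q_def using e by blast
  qed
  have chiQ: "\<chi> \<in> Q" unfolding chi_def Q_def[symmetric] using finQ neQ by (rule Min_in)
  then have chi_n: "\<chi> \<le> n" using Qsub by auto
  have chi_le: "\<chi> \<le> card (\<Union>S - e)" if "e \<in> E" "S \<subseteq> E" "e \<notin> S" "card S = q" for e S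
    unfolding chi_def Q_def[symmetric] by (rule Min_le[OF finQ]) (use that in \<open>auto simp: Q_def\<close>)
  have d1: "d \<ge> 1"
  proof (rule ccontr)
    assume "\<not> d \<ge> 1"
    then have d0: "d = 0" by simp
    have "e = {}" if e: "e \<in> E" for e
    proof -
      have "finite e" using e EU finU by (auto intro: finite_subset)
      moreover have "card e = 0" using hyp e d0 by auto
      ultimately show ?thesis by simp
    qed
    then have "E \<subseteq> {{}}" by auto
    then have "card E \<le> card {{}::nat set}" by (intro card_mono) auto
    then have "card E \<le> 1" by simp
    then show False using cE q_pos by linarith
  qed
  have c1: "\<chi> \<ge> 1" using chi_pos by simp
  define Sep where "Sep Ts = (\<forall>e\<in>E. \<forall>S. S \<subseteq> E \<and> e \<notin> S \<and> card S = q \<longrightarrow> (\<exists>T\<in>set Ts. T \<inter> e = {} \<and> T \<inter> (\<Union>S - e) \<noteq> {}))" for Ts :: "nat set list"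
  define bnm :: real where "bnm = real ((d + \<chi> - 1) choose (d + \<chi> - d - 1))"
  define \<beta>1 :: real where "\<beta>1 = exp (real q) * real (card E) * ((real (card E) - 1) / real q) ^ q"
  define x :: real where "x = (real n + real d - 1) / real (d + \<chi> - 1)"
  define \<beta>2 :: real where "\<beta>2 = exp (real (d + \<chi> - 1)) * x ^ (d + \<chi>)"
  define B where "B = bnm * min \<beta>1 \<beta>2"
  define RHS where "RHS = 2 * exp 1 * real (d + \<chi>) / real \<chi> * (1 + ln B)"
  have key: "\<exists>Ts. set Ts \<subseteq> Pow U \<and> Sep Ts \<and> real (length Ts) < RHS"
  proof -
    define m where "m = d + \<chi> - 1"
    have m_ge: "m \<ge> \<chi>" "m \<ge> 1" using d1 c1 unfolding m_def by auto
    have rm: "real m = real d + real \<chi> - 1" unfolding m_def using d1 by simp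
    have x1: "x \<ge> 1"
    proof -
      have "real n + real d - 1 \<ge> real m" using rm chi_n by simp
      moreover have "real m > 0" using m_ge by simp
      ultimately show ?thesis unfolding x_def m_def[symmetric] by simp
    qed
    have x0: "x \<ge> 0" using x1 by simp
    have bnm1: "bnm \<ge> 1"
    proof -
      have "d + \<chi> - d - 1 \<le> d + \<chi> - 1" by simp
      then have "0 < (d + \<chi> - 1) choose (d + \<chi> - d - 1)" by simp
      then show ?thesis unfolding bnm_def by linarith
    qed
    have b11: "\<beta>1 \<ge> 1"
    proof -
      have "(real (card E) - 1) / real q \<ge> 1" using cE q_pos by simp
      then have "((real (card E) - 1) / real q) ^ q \<ge> 1" by (rule one_le_power)
      moreover have "exp (real q) \<ge> 1" by simp
      moreover have "real (card E) \<ge> 1" using cE by simp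
      ultimately show ?thesis unfolding \<beta>1_def by (intro ge1_mult) auto
    qed
    have b21: "\<beta>2 \<ge> 1"
    proof -
      have "x ^ (d + \<chi>) \<ge> 1" using x1 by (rule one_le_power)
      moreover have "exp (real (d + \<chi> - 1)) \<ge> 1" by simp
      ultimately show ?thesis unfolding \<beta>2_def by (intro ge1_mult) auto
    qed
    have B1: "B \<ge> 1"
    proof -
      have "min \<beta>1 \<beta>2 \<ge> 1" using b11 b21 by simp
      then show ?thesis unfolding B_def using bnm1 by (intro ge1_mult) auto
    qed
    have BB: "B \<le> exp 1 * B ^ 2"
    proof -
      have "B \<le> B * B" using B1 by (intro le_mult_ge1) auto
      also have "\<dots> \<le> exp 1 * (B * B)" using B1 by (simp add: mult_le_cancel_right1 )
      finally show ?thesis by (simp add: power2_eq_square)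
    qed
    show ?thesis
    proof (cases "\<beta>1 \<le> \<beta>2")
      case True
      then have Bq: "B = bnm * \<beta>1" unfolding B_def by simp
      define Dom where "Dom = (SIGMA e:E. {S. S \<subseteq> E - {e} \<and> card S = q})"
      define Ev where "Ev = (\<lambda>(e,S). (e, \<Union>S - e)) ` Dom"
      have finDom: "finite Dom" unfolding Dom_def using finE
        by (intro finite_SigmaI) (auto intro: fin_subs)
      have finEv: "finite Ev" unfolding Ev_def using finDom by simp
      have "card Ev \<le> card Dom" unfolding Ev_def using finDom by (rule card_image_le)
      also have "card Dom = (\<Sum>e\<in>E. card {S. S \<subseteq> E - {e} \<and> card S = q})"
        unfolding Dom_def using finE by (intro card_SigmaI) (auto intro: fin_subs)
      also have "\<dots> = (\<Sum>e\<in>E. (card E - 1) choose q)"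
        using finE by (intro sum.cong[OF refl]) (simp add: n_subsets card_Diff_singleton)
      also have "\<dots> = card E * ((card E - 1) choose q)" by simp
      finally have cEv: "real (card Ev) \<le> real (card E) * real ((card E - 1) choose q)"
        by (simp only: of_nat_mult[symmetric] of_nat_le_iff)
      also have "\<dots> \<le> real (card E) * (exp 1 * real (card E - 1) / real q) ^ q"
        by (intro mult_left_mono choose_le_exp q_pos) simp
      also have "(exp 1 * real (card E - 1) / real q) ^ q = exp (real q) * ((real (card E) - 1) / real q) ^ q"
      proof -
        have r: "real (card E - 1) = real (card E) - 1" using cE by (simp add: of_nat_diff)
        have "(exp 1 * real (card E - 1) / real q) ^ q = exp 1 ^ q * ((real (card E) - 1) / real q) ^ q"
          unfolding r by (simp only: times_divide_eq_right[symmetric] power_mult_distrib)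
        moreover have "exp 1 ^ q = exp (real q)" by (simp add: exp_of_nat_mult[symmetric])
        ultimately show ?thesis by simp
      qed
      also have "real (card E) * \<dots> = \<beta>1" unfolding \<beta>1_def by simp
      also have "\<beta>1 \<le> B" unfolding Bq using bnm1 b11 by (intro le_mult_ge1) auto
      finally have NB: "real (card Ev) \<le> exp 1 * B ^ 2" using BB by linarith
      have valid: "\<forall>(e,Y)\<in>Ev. e \<subseteq> U \<and> Y \<subseteq> U \<and> e \<inter> Y = {} \<and> card e \<le> d \<and> card Y \<ge> \<chi>"
      proof
        fix ev assume "ev \<in> Ev"
        then obtain z where z: "z \<in> Dom" "ev = (\<lambda>(e,S). (e, \<Union>S - e)) z" unfolding Ev_def by blast
        obtain e S where zz: "z = (e,S)" by fastforce
        have eS: "ev = (e, \<Union>S - e)" "e \<in> E" "S \<subseteq> E - {e}" "card S = q"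
          using z unfolding zz Dom_def by auto
        have "\<chi> \<le> card (\<Union>S - e)" using chi_le[of e S] eS by auto
        then show "case ev of (e,Y) \<Rightarrow> e \<subseteq> U \<and> Y \<subseteq> U \<and> e \<inter> Y = {} \<and> card e \<le> d \<and> card Y \<ge> \<chi>"
          using eS EU hyp by auto
      qed
      obtain Ts where Ts: "set Ts \<subseteq> Pow U" "\<forall>(e,Y)\<in>Ev. \<exists>T\<in>set Ts. T \<inter> e = {} \<and> T \<inter> Y \<noteq> {}"
        "real (length Ts) < 2 * exp 1 * real (d + \<chi>) / real \<chi> * (1 + ln B)"
        using cover_exists[OF finU finEv d1 c1 valid B1 NB] by blast
      have "Sep Ts" unfolding Sep_def
      proof (intro ballI allI impI)
        fix e S assume e: "e \<in> E" and S: "S \<subseteq> E \<and> e \<notin> S \<and> card S = q"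
        have "S \<subseteq> E - {e}" using S by blast
        then have "(e,S) \<in> Dom" unfolding Dom_def using e S by simp
        moreover have "(e, \<Union>S - e) = (\<lambda>(e,S). (e, \<Union>S - e)) (e,S)" by simp
        ultimately have "(e, \<Union>S - e) \<in> Ev" unfolding Ev_def by (rule rev_image_eqI)
        then have "case (e, \<Union>S - e) of (e, Y) \<Rightarrow> \<exists>T\<in>set Ts. T \<inter> e = {} \<and> T \<inter> Y \<noteq> {}"
          by (rule bspec[OF Ts(2)])
        then show "\<exists>T\<in>set Ts. T \<inter> e = {} \<and> T \<inter> (\<Union>S - e) \<noteq> {}" by simp
      qed
      moreover have "real (length Ts) < RHS" unfolding RHS_def by (rule Ts(3))
      ultimately show ?thesis using Ts(1) by blast
    next
      case False
      then have Bq: "B = bnm * \<beta>2" unfolding B_def by simp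
      define Ev where "Ev = {(e,Y). e \<in> E \<and> Y \<subseteq> {1..n} - e \<and> card Y = \<chi>}"
      have finEv: "finite Ev"
        by (rule finite_subset[of _ "E \<times> Pow U"]) (use finE finU in \<open>auto simp: Ev_def U_def\<close>)
      have c2: "card Ev \<le> ((n+d) choose (d+\<chi>)) * ((d+\<chi>) choose \<chi>)"
        unfolding Ev_def by (rule count_ev2[OF hyp finE])
      have cb: "(d+\<chi>) choose \<chi> \<le> (d+\<chi>) * (m choose (\<chi> - 1))"
      proof -
        have "Suc m * (m choose (\<chi> - 1)) = (Suc m choose Suc (\<chi> - 1)) * Suc (\<chi> - 1)"
          by (rule Suc_times_binomial_eq)
        moreover have "Suc m = d + \<chi>" "Suc (\<chi> - 1) = \<chi>" using m_ge c1 unfolding m_def by auto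
        ultimately have "(d+\<chi>) * (m choose (\<chi> - 1)) = ((d+\<chi>) choose \<chi>) * \<chi>" by simp
        moreover have "((d+\<chi>) choose \<chi>) \<le> ((d+\<chi>) choose \<chi>) * \<chi>" using c1 by simp
        ultimately show ?thesis by simp
      qed
      have bnm_eq: "bnm = real (m choose (\<chi> - 1))" unfolding bnm_def m_def by simp
      define K where "K = d + \<chi>"
      have rK: "real m = real K - 1" unfolding K_def using rm by simp
      have cnb: "real ((n+d) choose K) \<le> (exp 1 * x) ^ K"
      proof -
        have "real ((n+d) choose K) \<le> (exp 1 * real (n+d) / real K) ^ K"
          by (rule choose_le_exp) (use c1 K_def in simp)
        also have "\<dots> \<le> (exp 1 * x) ^ K"
        proof (rule power_mono)
          have Kp: "real K > 0" "real m > 0" using c1 m_ge unfolding K_def by auto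
          have e1: "real (n+d) * real m = real (n+d) * real K - real (n+d)" unfolding rK by (simp add: algebra_simps)
          have e2: "(real n + real d - 1) * real K = real (n+d) * real K - real K" by (simp add: algebra_simps)
          have "real K \<le> real (n+d)" using chi_n unfolding K_def by simp
          then have "real (n+d) * real m \<le> (real n + real d - 1) * real K" using e1 e2 by linarith
          then have "real (n+d) / real K \<le> x" unfolding x_def m_def[symmetric] using Kp
            by (simp add: divide_simps)
          then have "exp 1 * (real (n+d) / real K) \<le> exp 1 * x" by (intro mult_left_mono) auto
          then show "exp 1 * real (n+d) / real K \<le> exp 1 * x" by simp
          show "0 \<le> exp 1 * real (n+d) / real K" by simp
        qed
        finally show ?thesis .
      qed
      have "real (card Ev) \<le> real ((n+d) choose K) * real ((d+\<chi>) choose \<chi>)"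
        using c2 unfolding K_def by (simp only: of_nat_mult[symmetric] of_nat_le_iff add.commute)
      also have "\<dots> \<le> (exp 1 * x) ^ K * (real K * bnm)"
      proof (rule mult_mono[OF cnb])
        show "real ((d+\<chi>) choose \<chi>) \<le> real K * bnm" unfolding bnm_eq K_def
          using cb by (simp only: of_nat_mult[symmetric] of_nat_le_iff)
        show "0 \<le> (exp 1 * x) ^ K" using x0 by simp
      qed auto
      also have "\<dots> = bnm * (real K * exp (real K) * x ^ K)"
        by (simp add: power_mult_distrib exp_of_nat_mult[symmetric] mult.commute mult.left_commute)
      also have "\<dots> \<le> bnm * (exp (real m) * exp (real K) * x ^ K * x ^ K)"
      proof (rule mult_left_mono)
        have "real K \<le> exp (real m)" using exp_ge_add_one_self[of "real m"] rK by simp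
        moreover have "x ^ K \<le> x ^ K * x ^ K" using one_le_power[OF x1, of K]
          by (intro le_mult_ge1) auto
        ultimately have "real K * x ^ K \<le> exp (real m) * (x ^ K * x ^ K)"
          using x0 by (intro mult_mono) auto
        then have "(real K * x ^ K) * exp (real K) \<le> (exp (real m) * (x ^ K * x ^ K)) * exp (real K)"
          by (intro mult_right_mono) auto
        then show "real K * exp (real K) * x ^ K \<le> exp (real m) * exp (real K) * x ^ K * x ^ K"
          by (simp add: algebra_simps)
      qed (use bnm1 in simp)
      also have "\<dots> = exp 1 * (bnm * \<beta>2 ^ 2)"
        unfolding \<beta>2_def m_def[symmetric] K_def[symmetric] using rK
        by (simp add: power2_eq_square exp_add[symmetric] algebra_simps)
      also have "\<dots> \<le> exp 1 * B ^ 2"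
      proof -
        have "bnm * \<beta>2 ^ 2 \<le> bnm * (bnm * \<beta>2 ^ 2)" using bnm1
          by (intro le_mult_ge1) auto
        then have "bnm * \<beta>2 ^ 2 \<le> (bnm * \<beta>2) ^ 2" by (simp add: power2_eq_square algebra_simps)
        then show ?thesis unfolding Bq by simp
      qed
      finally have NB: "real (card Ev) \<le> exp 1 * B ^ 2" .
      have valid: "\<forall>(e,Y)\<in>Ev. e \<subseteq> U \<and> Y \<subseteq> U \<and> e \<inter> Y = {} \<and> card e \<le> d \<and> card Y \<ge> \<chi>"
        unfolding Ev_def U_def using hyp by auto
      obtain Ts where Ts: "set Ts \<subseteq> Pow U" "\<forall>(e,Y)\<in>Ev. \<exists>T\<in>set Ts. T \<inter> e = {} \<and> T \<inter> Y \<noteq> {}"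
        "real (length Ts) < 2 * exp 1 * real (d + \<chi>) / real \<chi> * (1 + ln B)"
        using cover_exists[OF finU finEv d1 c1 valid B1 NB] by blast
      have "Sep Ts" unfolding Sep_def
      proof (intro ballI allI impI)
        fix e S assume e: "e \<in> E" and S: "S \<subseteq> E \<and> e \<notin> S \<and> card S = q"
        have "\<chi> \<le> card (\<Union>S - e)" using S by (intro chi_le[OF e]) auto
        then obtain Y where Y: "Y \<subseteq> \<Union>S - e" "card Y = \<chi>"
          using obtain_subset_with_card_n by blast
        have "\<Union>S \<subseteq> {1..n}" using S EU unfolding U_def by blast
        then have "Y \<subseteq> {1..n} - e" using Y(1) by blast
        then have "(e, Y) \<in> Ev" unfolding Ev_def using Y(2) e by simp
        then have "case (e, Y) of (e, Y) \<Rightarrow> \<exists>T\<in>set Ts. T \<inter> e = {} \<and> T \<inter> Y \<noteq> {}"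
          by (rule bspec[OF Ts(2)])
        then obtain T where T: "T \<in> set Ts" "T \<inter> e = {}" "T \<inter> Y \<noteq> {}" by auto
        have "T \<inter> (\<Union>S - e) \<noteq> {}" using T(3) Y(1) by blast
        then show "\<exists>T\<in>set Ts. T \<inter> e = {} \<and> T \<inter> (\<Union>S - e) \<noteq> {}" using T(1,2) by blast
      qed
      moreover have "real (length Ts) < RHS" unfolding RHS_def by (rule Ts(3))
      ultimately show ?thesis using Ts(1) by blast
    qed
  qed
  then obtain Ts where Ts: "set Ts \<subseteq> Pow U" "Sep Ts" "real (length Ts) < RHS" by blast
  obtain S dec where Sd: "trivial_two_stage_alg n E Ts S dec" "num_tests E Ts S \<le> length Ts + d * q"
    using alg[OF hyp finE neE _ Ts(1)[unfolded U_def]] Ts(2) unfolding Sep_def by blast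
  have "real (num_tests E Ts S) \<le> real (length Ts) + real (d * q)"
    using Sd(2) by (simp only: of_nat_add[symmetric] of_nat_le_iff)
  then have "real (num_tests E Ts S) < RHS + real (d * q)" using Ts(3) by linarith
  then show ?thesis using Sd(1) unfolding RHS_def B_def bnm_def \<beta>1_def \<beta>2_def x_def by blast
qed

end
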